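(* Let $\Gamma$ be a $G$-distance-transitive graph of diameter $d$ with intersection array $\{b_0,\dots,b_{d-1};c_1,\dots,c_d\}$, and let $X,Y$ be vertices with $d(X,Y)=d$. Then $\Gamma$ is $G$-geodesic-transitive if and only if the stabilizer in $G$ of the ordered pair $(X,Y)$ acts transitively on the set $\mathcal{L}_{XY}$ of geodesics from $X$ to $Y$. Moreover, $|\mathcal{L}_{XY}|=c_1c_2\cdots c_d$.
   Context: All graphs are finite, simple, undirected, connected. A geodesic of length $\ell$ from $X$ to $Y$ is a vertex sequence $(X=v_0,\dots,v_\ell=Y)$ with consecutive vertices adjacent and $d(X,Y)=\ell$. For $G\le\mathrm{Aut}\,\Gamma$, $\Gamma$ is $G$-distance-transitive if $G$ is transitive on ordered pairs of vertices at distance $i$ for each $i$, and $G$-geodesic-transitive if $G$ is transitive on the set of geodesics of length $\ell$ for each $\ell\ge1$. The intersection array: for any $X,Y$ at distance $i$, exactly $c_i$ neighbours of $X$ lie at distance $i-1$ from $Y$ and exactly $b_i$ at distance $i+1$ from $Y$. *)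

theory Defs
  imports Main "HOL-Algebra.Bij"
begin

definition walk :: "'a set \<Rightarrow> ('a \<Rightarrow> 'a \<Rightarrow> bool) \<Rightarrow> 'a list \<Rightarrow> bool" where
  "walk V E xs \<longleftrightarrow> xs \<noteq> [] \<and> set xs \<subseteq> V \<and> successively E xs"

definition conn_graph :: "'a set \<Rightarrow> ('a \<Rightarrow> 'a \<Rightarrow> bool) \<Rightarrow> bool" where
  "conn_graph V E \<longleftrightarrow> finite V \<and> V \<noteq> {} \<and>
     (\<forall>x y. E x y \<longrightarrow> x \<in> V \<and> y \<in> V) \<and>
     (\<forall>x y. E x y \<longrightarrow> E y x) \<and> (\<forall>x. \<not> E x x) \<and>
     (\<forall>x\<in>V. \<forall>y\<in>V. \<exists>xs. walk V E xs \<and> hd xs = x \<and> last xs = y)"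

definition gdist :: "'a set \<Rightarrow> ('a \<Rightarrow> 'a \<Rightarrow> bool) \<Rightarrow> 'a \<Rightarrow> 'a \<Rightarrow> nat" where
  "gdist V E x y = (LEAST n. \<exists>xs. walk V E xs \<and> hd xs = x \<and> last xs = y \<and> length xs = n + 1)"

definition diameter :: "'a set \<Rightarrow> ('a \<Rightarrow> 'a \<Rightarrow> bool) \<Rightarrow> nat" where
  "diameter V E = Max {gdist V E x y | x y. x \<in> V \<and> y \<in> V}"

definition geodesic :: "'a set \<Rightarrow> ('a \<Rightarrow> 'a \<Rightarrow> bool) \<Rightarrow> 'a \<Rightarrow> 'a \<Rightarrow> 'a list \<Rightarrow> bool" where
  "geodesic V E x y xs \<longleftrightarrow> walk V E xs \<and> hd xs = x \<and> last xs = y \<and>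
     length xs = gdist V E x y + 1"

definition geodesics_between :: "'a set \<Rightarrow> ('a \<Rightarrow> 'a \<Rightarrow> bool) \<Rightarrow> 'a \<Rightarrow> 'a \<Rightarrow> 'a list set" where
  "geodesics_between V E x y = {xs. geodesic V E x y xs}"

definition geodesics_of_length :: "'a set \<Rightarrow> ('a \<Rightarrow> 'a \<Rightarrow> bool) \<Rightarrow> nat \<Rightarrow> 'a list set" where
  "geodesics_of_length V E l =
     {xs. \<exists>x\<in>V. \<exists>y\<in>V. geodesic V E x y xs \<and> length xs = l + 1}"

definition graph_aut :: "'a set \<Rightarrow> ('a \<Rightarrow> 'a \<Rightarrow> bool) \<Rightarrow> ('a \<Rightarrow> 'a) \<Rightarrow> bool" where
  "graph_aut V E g \<longleftrightarrow> g \<in> Bij V \<and> (\<forall>x\<in>V. \<forall>y\<in>V. E x y \<longleftrightarrow> E (g x) (g y))"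

definition aut_subgroup :: "'a set \<Rightarrow> ('a \<Rightarrow> 'a \<Rightarrow> bool) \<Rightarrow> ('a \<Rightarrow> 'a) set \<Rightarrow> bool" where
  "aut_subgroup V E G \<longleftrightarrow> subgroup G (BijGroup V) \<and> (\<forall>g\<in>G. graph_aut V E g)"

definition distance_transitive :: "'a set \<Rightarrow> ('a \<Rightarrow> 'a \<Rightarrow> bool) \<Rightarrow> ('a \<Rightarrow> 'a) set \<Rightarrow> bool" where
  "distance_transitive V E G \<longleftrightarrow>
     (\<forall>i. \<forall>x\<in>V. \<forall>y\<in>V. \<forall>u\<in>V. \<forall>v\<in>V.
        gdist V E x y = i \<and> gdist V E u v = i \<longrightarrow> (\<exists>g\<in>G. g x = u \<and> g y = v))"

definition geodesic_transitive :: "'a set \<Rightarrow> ('a \<Rightarrow> 'a \<Rightarrow> bool) \<Rightarrow> ('a \<Rightarrow> 'a) set \<Rightarrow> bool" where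
  "geodesic_transitive V E G \<longleftrightarrow>
     (\<forall>l\<ge>1. \<forall>p\<in>geodesics_of_length V E l. \<forall>q\<in>geodesics_of_length V E l.
        \<exists>g\<in>G. map g p = q)"

definition intersection_c :: "'a set \<Rightarrow> ('a \<Rightarrow> 'a \<Rightarrow> bool) \<Rightarrow> (nat \<Rightarrow> nat) \<Rightarrow> bool" where
  "intersection_c V E c \<longleftrightarrow>
     (\<forall>i\<in>{1..diameter V E}. \<forall>x\<in>V. \<forall>y\<in>V. gdist V E x y = i \<longrightarrow>
        card {z\<in>V. E x z \<and> gdist V E z y = i - 1} = c i)"

end

theory Submission
  imports Defs
begin

lemma walk_Cons2: "walk V E (x # y # xs) \<longleftrightarrow> x \<in> V \<and> E x y \<and> walk V E (y # xs)"
  by (auto simp: walk_def)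

lemma walk_single: "walk V E [x] \<longleftrightarrow> x \<in> V"
  by (auto simp: walk_def)

lemma gdist_wit:
  assumes "conn_graph V E" "x \<in> V" "y \<in> V"
  shows "\<exists>xs. walk V E xs \<and> hd xs = x \<and> last xs = y \<and> length xs = gdist V E x y + 1"
proof -
  obtain xs where xs: "walk V E xs" "hd xs = x" "last xs = y"
    using assms unfolding conn_graph_def by blast
  then have "\<exists>n xs. walk V E xs \<and> hd xs = x \<and> last xs = y \<and> length xs = n + 1"
    by (intro exI[of _ "length xs - 1"] exI[of _ xs]) (auto simp: walk_def)
  then show ?thesis unfolding gdist_def by (rule LeastI_ex)
qed

lemma gdist_le:
  assumes "walk V E xs" "hd xs = x" "last xs = y"
  shows "gdist V E x y + 1 \<le> length xs"
proof -
  have "gdist V E x y \<le> length xs - 1" unfolding gdist_def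
    by (rule Least_le) (use assms in \<open>auto simp: walk_def\<close>)
  then show ?thesis using assms by (cases xs) (auto simp: walk_def)
qed

lemma gdist_refl: "x \<in> V \<Longrightarrow> gdist V E x x = 0"
  using gdist_le[of V E "[x]" x x] by (auto simp: walk_def)

lemma gdist_0:
  assumes "conn_graph V E" "x \<in> V" "y \<in> V" "gdist V E x y = 0" shows "x = y"
  using gdist_wit[OF assms(1-3)] assms(4) by (auto simp: length_Suc_conv)

lemma edge_V: "conn_graph V E \<Longrightarrow> E x y \<Longrightarrow> x \<in> V \<and> y \<in> V"
  by (auto simp: conn_graph_def)

lemma gdist_prepend:
  assumes "conn_graph V E" "E x z" "y \<in> V"
  shows "gdist V E x y \<le> gdist V E z y + 1"
proof -
  have V: "x \<in> V" "z \<in> V" using edge_V[OF assms(1,2)] by auto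
  obtain xs where xs: "walk V E xs" "hd xs = z" "last xs = y" "length xs = gdist V E z y + 1"
    using gdist_wit[OF assms(1) V(2) assms(3)] by blast
  have "walk V E (x # xs)" using xs V assms(2) by (cases xs) (auto simp: walk_def)
  from gdist_le[OF this] xs show ?thesis by (cases xs) auto
qed

lemma gdist_append:
  assumes "conn_graph V E" "E z w" "x \<in> V"
  shows "gdist V E x w \<le> gdist V E x z + 1"
proof -
  have V: "z \<in> V" "w \<in> V" using edge_V[OF assms(1,2)] by auto
  obtain xs where xs: "walk V E xs" "hd xs = x" "last xs = z" "length xs = gdist V E x z + 1"
    using gdist_wit[OF assms(1) assms(3) V(1)] by blast
  have "walk V E (xs @ [w])" using xs V assms(2) by (auto simp: walk_def successively_append_iff)
  from gdist_le[OF this] xs show ?thesis by (cases xs) auto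
qed

lemma gdist_suffix:
  assumes "conn_graph V E" "x \<in> V" "walk V E ys" "hd ys = z"
  shows "gdist V E x (last ys) \<le> gdist V E x z + (length ys - 1)"
  using assms(3,4)
proof (induction ys rule: rev_induct)
  case Nil then show ?case by (simp add: walk_def)
next
  case (snoc w ys)
  show ?case
  proof (cases "ys = []")
    case True then show ?thesis using snoc by simp
  next
    case False
    have w: "walk V E ys" "E (last ys) w" using snoc.prems False
      by (auto simp: walk_def successively_append_iff)
    have "hd ys = z" using snoc.prems False by simp
    from snoc.IH[OF w(1) this] gdist_append[OF assms(1) w(2) assms(2)] False
    show ?thesis by (cases ys) auto
  qed
qed

lemma geodesic_prefix:
  assumes "conn_graph V E" "geodesic V E x y xs" "k < length xs"
  shows "gdist V E x (xs ! k) = k"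
proof -
  have w: "walk V E xs" "hd xs = x" "last xs = y" "length xs = gdist V E x y + 1"
    using assms(2) by (auto simp: geodesic_def)
  have x: "x \<in> V" using w by (cases xs) (auto simp: walk_def)
  have ne: "xs \<noteq> []" using w(1) by (simp add: walk_def)
  have "walk V E (take (Suc k) xs)" using w(1) assms(3)
    by (auto simp: walk_def dest: in_set_takeD)
      (metis append_take_drop_id successively_append_iff)
  moreover have "hd (take (Suc k) xs) = x" "last (take (Suc k) xs) = xs ! k"
    using w assms(3) ne by (auto simp: take_Suc_conv_app_nth hd_conv_nth nth_append)
  ultimately have le: "gdist V E x (xs ! k) \<le> k"
    using gdist_le[of V E "take (Suc k) xs"] assms(3) by fastforce
  have "walk V E (drop k xs)" using w(1) assms(3)
    by (auto simp: walk_def dest: in_set_dropD)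
      (metis append_take_drop_id successively_append_iff)
  moreover have "hd (drop k xs) = xs ! k" "last (drop k xs) = y"
    using w assms(3) by (auto simp: hd_drop_conv_nth)
  ultimately have "gdist V E x y \<le> gdist V E x (xs ! k) + (length xs - k - 1)"
    using gdist_suffix[OF assms(1) x, of "drop k xs" "xs ! k"] by simp
  with w(4) le assms(3) show ?thesis by linarith
qed

lemma aut_walk:
  assumes "graph_aut V E g" "walk V E xs"
  shows "walk V E (map g xs)"
proof -
  have g: "g \<in> V \<rightarrow> V" using assms(1) by (auto simp: graph_aut_def Bij_imp_funcset)
  have s: "set xs \<subseteq> V" using assms(2) by (simp add: walk_def)
  have "successively E xs" using assms(2) by (simp add: walk_def)
  then have "successively (\<lambda>a b. E (g a) (g b)) xs"
    by (rule successively_mono) (use assms(1) s in \<open>auto simp: graph_aut_def\<close>)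
  then show ?thesis using assms(2) g s by (auto simp: walk_def successively_map)
qed

lemma G_aut: "aut_subgroup V E G \<Longrightarrow> g \<in> G \<Longrightarrow> graph_aut V E g"
  by (simp add: aut_subgroup_def)

lemma G_Bij: "aut_subgroup V E G \<Longrightarrow> g \<in> G \<Longrightarrow> g \<in> Bij V"
  by (simp add: aut_subgroup_def graph_aut_def)

lemma G_maps: "aut_subgroup V E G \<Longrightarrow> g \<in> G \<Longrightarrow> x \<in> V \<Longrightarrow> g x \<in> V"
  using G_Bij Bij_imp_funcset by fast

lemma G_inv:
  assumes "aut_subgroup V E G" "g \<in> G"
  shows "\<exists>h\<in>G. \<forall>x\<in>V. h (g x) = x"
proof -
  have sg: "subgroup G (BijGroup V)" using assms(1) by (simp add: aut_subgroup_def)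
  have gB: "g \<in> Bij V" using G_Bij[OF assms] .
  have "inv\<^bsub>BijGroup V\<^esub> g \<in> G" using subgroup.m_inv_closed[OF sg assms(2)] .
  moreover have "\<forall>x\<in>V. (inv\<^bsub>BijGroup V\<^esub> g) (g x) = x"
    using gB inv_BijGroup[OF gB] by (auto simp: Bij_def bij_betw_def inv_into_f_f)
  ultimately show ?thesis by blast
qed

lemma G_comp:
  assumes "aut_subgroup V E G" "g \<in> G" "h \<in> G"
  shows "\<exists>k\<in>G. \<forall>x\<in>V. k x = g (h x)"
proof -
  have sg: "subgroup G (BijGroup V)" using assms(1) by (simp add: aut_subgroup_def)
  have "g \<otimes>\<^bsub>BijGroup V\<^esub> h \<in> G" using subgroup.m_closed[OF sg assms(2,3)] .
  moreover have "g \<otimes>\<^bsub>BijGroup V\<^esub> h = compose V g h"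
    using G_Bij[OF assms(1,2)] G_Bij[OF assms(1,3)] by (simp add: BijGroup_def)
  ultimately show ?thesis by (intro bexI[of _ "compose V g h"]) (auto simp: compose_def)
qed

lemma G_one:
  assumes "aut_subgroup V E G"
  shows "\<exists>k\<in>G. \<forall>x\<in>V. k x = x"
proof -
  have sg: "subgroup G (BijGroup V)" using assms(1) by (simp add: aut_subgroup_def)
  have "\<one>\<^bsub>BijGroup V\<^esub> \<in> G" using subgroup.one_closed[OF sg] .
  then show ?thesis by (intro bexI[of _ "\<lambda>x\<in>V. x"]) (auto simp: BijGroup_def)
qed

lemma gdist_aut_le:
  assumes "conn_graph V E" "aut_subgroup V E G" "g \<in> G" "x \<in> V" "y \<in> V"
  shows "gdist V E (g x) (g y) \<le> gdist V E x y"
proof -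
  obtain xs where xs: "walk V E xs" "hd xs = x" "last xs = y" "length xs = gdist V E x y + 1"
    using gdist_wit[OF assms(1,4,5)] by blast
  have "walk V E (map g xs)" using aut_walk[OF G_aut[OF assms(2,3)] xs(1)] .
  moreover have "xs \<noteq> []" using xs(1) by (simp add: walk_def)
  ultimately show ?thesis using gdist_le[of V E "map g xs"] xs by (simp add: hd_map last_map)
qed

lemma gdist_aut:
  assumes "conn_graph V E" "aut_subgroup V E G" "g \<in> G" "x \<in> V" "y \<in> V"
  shows "gdist V E (g x) (g y) = gdist V E x y"
proof -
  obtain h where h: "h \<in> G" "\<forall>x\<in>V. h (g x) = x" using G_inv[OF assms(2,3)] by blast
  have "gdist V E (h (g x)) (h (g y)) \<le> gdist V E (g x) (g y)"
    by (rule gdist_aut_le[OF assms(1,2) h(1)]) (use G_maps[OF assms(2,3)] assms in auto)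
  with h assms gdist_aut_le[OF assms] show ?thesis by simp
qed

lemma geodesic_aut:
  assumes "conn_graph V E" "aut_subgroup V E G" "g \<in> G" "x \<in> V" "y \<in> V"
    "geodesic V E x y p"
  shows "geodesic V E (g x) (g y) (map g p)"
proof -
  have p: "walk V E p" "hd p = x" "last p = y" "length p = gdist V E x y + 1" "p \<noteq> []"
    using assms(6) by (auto simp: geodesic_def walk_def)
  show ?thesis using aut_walk[OF G_aut[OF assms(2,3)] p(1)] p gdist_aut[OF assms(1-5)]
    by (simp add: geodesic_def hd_map last_map)
qed

lemma gdist_le_diam:
  assumes "conn_graph V E" "x \<in> V" "y \<in> V"
  shows "gdist V E x y \<le> diameter V E"
proof -
  have "{gdist V E x y | x y. x \<in> V \<and> y \<in> V} = (\<lambda>(x,y). gdist V E x y) ` (V \<times> V)" by auto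
  moreover have "finite V" using assms(1) by (simp add: conn_graph_def)
  ultimately have "finite {gdist V E x y | x y. x \<in> V \<and> y \<in> V}" by simp
  then show ?thesis unfolding diameter_def by (rule Max_ge) (use assms in auto)
qed

lemma diam_attained:
  assumes "conn_graph V E"
  shows "\<exists>x\<in>V. \<exists>y\<in>V. gdist V E x y = diameter V E"
proof -
  have "{gdist V E x y | x y. x \<in> V \<and> y \<in> V} = (\<lambda>(x,y). gdist V E x y) ` (V \<times> V)" by auto
  moreover have "finite V" "V \<noteq> {}" using assms(1) by (auto simp: conn_graph_def)
  ultimately have "finite {gdist V E x y | x y. x \<in> V \<and> y \<in> V}"
     "{gdist V E x y | x y. x \<in> V \<and> y \<in> V} \<noteq> {}" by auto
  from Max_in[OF this] obtain x y where "x \<in> V" "y \<in> V"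
    "Max {gdist V E x y | x y. x \<in> V \<and> y \<in> V} = gdist V E x y" by blast
  then show ?thesis unfolding diameter_def by metis
qed

lemma step_ext:
  assumes "conn_graph V E" "aut_subgroup V E G" "distance_transitive V E G"
    "u \<in> V" "v \<in> V" "gdist V E u v < diameter V E"
  shows "\<exists>w. E v w \<and> gdist V E u w = gdist V E u v + 1"
proof -
  obtain X Y where XY: "X \<in> V" "Y \<in> V" "gdist V E X Y = diameter V E"
    using diam_attained[OF assms(1)] by blast
  obtain P where P: "walk V E P" "hd P = X" "last P = Y" "length P = gdist V E X Y + 1"
    using gdist_wit[OF assms(1) XY(1,2)] by blast
  have geo: "geodesic V E X Y P" using P by (simp add: geodesic_def)
  define i where "i = gdist V E u v"
  have il: "Suc i < length P" using P(4) XY(3) assms(6) i_def by simp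
  have a: "gdist V E X (P ! i) = i" using geodesic_prefix[OF assms(1) geo] il by simp
  have b: "gdist V E X (P ! Suc i) = Suc i" using geodesic_prefix[OF assms(1) geo il] .
  have ab: "E (P ! i) (P ! Suc i)" using P(1) il by (simp add: walk_def successively_nth)
  have aV: "P ! i \<in> V" "P ! Suc i \<in> V" using P(1) il nth_mem[of i P] nth_mem[of "Suc i" P]
    by (auto simp: walk_def)
  obtain g where g: "g \<in> G" "g X = u" "g (P ! i) = v"
    using assms(3) XY(1) aV(1) assms(4,5) a i_def unfolding distance_transitive_def by metis
  have "E v (g (P ! Suc i))" using G_aut[OF assms(2) g(1)] ab aV g(3)
    by (auto simp: graph_aut_def)
  moreover have "gdist V E u (g (P ! Suc i)) = Suc i"
    using gdist_aut[OF assms(1,2) g(1) XY(1) aV(2)] b g(2) by simp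
  ultimately show ?thesis using i_def by auto
qed

lemma ext_full:
  assumes "conn_graph V E" "aut_subgroup V E G" "distance_transitive V E G"
  shows "u \<in> V \<Longrightarrow> v \<in> V \<Longrightarrow> geodesic V E u v p \<Longrightarrow> gdist V E u v + n = diameter V E \<Longrightarrow>
    \<exists>P. geodesic V E u (last P) P \<and> last P \<in> V \<and> gdist V E u (last P) = diameter V E
      \<and> take (length p) P = p"
proof (induction n arbitrary: v p)
  case 0
  then show ?case
  proof (intro exI[of _ p] conjI)
    show "geodesic V E u (last p) p" "last p \<in> V" "gdist V E u (last p) = diameter V E"
      using 0 by (auto simp: geodesic_def)
  qed (rule take_all[OF order_refl])
next
  case (Suc n)
  obtain w where w: "E v w" "gdist V E u w = gdist V E u v + 1"
    using step_ext[OF assms Suc.prems(1,2)] Suc.prems(4) by auto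
  have wV: "w \<in> V" using edge_V[OF assms(1) w(1)] by simp
  have p: "walk V E p" "hd p = u" "last p = v" "length p = gdist V E u v + 1" "p \<noteq> []"
    using Suc.prems(3) by (auto simp: geodesic_def walk_def)
  have "geodesic V E u w (p @ [w])"
    using p w wV by (auto simp: geodesic_def walk_def successively_append_iff)
  from Suc.IH[OF Suc.prems(1) wV this] Suc.prems(4) w(2) obtain P where
    P: "geodesic V E u (last P) P" "last P \<in> V" "gdist V E u (last P) = diameter V E"
      "take (length (p @ [w])) P = p @ [w]" by auto
  have "take (length p) P = p"
    using arg_cong[OF P(4), of "take (length p)"] by (simp add: min_def)
  with P show ?case by blast
qed

lemma finite_geod:
  assumes "conn_graph V E"
  shows "finite (geodesics_between V E x y)"
proof -
  have "geodesics_between V E x y \<subseteq> {xs. set xs \<subseteq> V \<and> length xs = gdist V E x y + 1}"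
    by (auto simp: geodesics_between_def geodesic_def walk_def)
  moreover have "finite V" using assms by (simp add: conn_graph_def)
  ultimately show ?thesis using finite_lists_length_eq finite_subset by blast
qed

lemma geod_decomp:
  assumes "conn_graph V E" "x \<in> V" "y \<in> V" "gdist V E x y = Suc n"
  shows "geodesics_between V E x y =
    (\<Union>z\<in>{z\<in>V. E x z \<and> gdist V E z y = n}. (Cons x) ` geodesics_between V E z y)"
proof (intro equalityI subsetI)
  fix xs assume "xs \<in> geodesics_between V E x y"
  then have xs: "walk V E xs" "hd xs = x" "last xs = y" "length xs = Suc n + 1"
    using assms(4) by (auto simp: geodesics_between_def geodesic_def)
  obtain ys where ys1: "xs = x # ys" using xs(1,2) by (cases xs) (auto simp: walk_def)
  have ys: "xs = x # ys" "ys \<noteq> []" using ys1 xs(4) by auto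
  have w: "walk V E ys" "E x (hd ys)" using xs(1) ys by (cases ys; auto simp: walk_def)+
  have l: "last ys = y" "length ys = n + 1" using xs ys by auto
  have "gdist V E (hd ys) y \<le> n" using gdist_le[OF w(1) refl l(1)] l by simp
  moreover have "Suc n \<le> gdist V E (hd ys) y + 1"
    using gdist_prepend[OF assms(1) w(2) assms(3)] assms(4) by simp
  ultimately have gd: "gdist V E (hd ys) y = n" by simp
  have "hd ys \<in> V" using edge_V[OF assms(1) w(2)] by simp
  moreover have "ys \<in> geodesics_between V E (hd ys) y"
    using w l gd by (simp add: geodesics_between_def geodesic_def)
  ultimately show "xs \<in> (\<Union>z\<in>{z\<in>V. E x z \<and> gdist V E z y = n}. (Cons x) ` geodesics_between V E z y)"
    using ys gd w by blast
next
  fix xs assume "xs \<in> (\<Union>z\<in>{z\<in>V. E x z \<and> gdist V E z y = n}. (Cons x) ` geodesics_between V E z y)"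
  then obtain z ys where z: "z \<in> V" "E x z" "gdist V E z y = n" "xs = x # ys"
    "geodesic V E z y ys" by (auto simp: geodesics_between_def)
  then have ys: "walk V E ys" "hd ys = z" "last ys = y" "length ys = n + 1" "ys \<noteq> []"
    by (auto simp: geodesic_def walk_def)
  have "walk V E (x # ys)" using ys assms(2) z(2) by (cases ys) (auto simp: walk_def)
  then show "xs \<in> geodesics_between V E x y"
    using z ys assms(4) by (auto simp: geodesics_between_def geodesic_def)
qed

lemma count_geod:
  assumes "conn_graph V E" "intersection_c V E c"
  shows "x \<in> V \<Longrightarrow> y \<in> V \<Longrightarrow> gdist V E x y = i \<Longrightarrow>
    card (geodesics_between V E x y) = (\<Prod>j=1..i. c j)"
proof (induction i arbitrary: x)
  case 0
  then have "x = y" using gdist_0[OF assms(1)] by blast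
  have "geodesics_between V E x y = {[x]}"
    using 0 \<open>x = y\<close> by (auto simp: geodesics_between_def geodesic_def walk_def length_Suc_conv)
  then show ?case by simp
next
  case (Suc n)
  define S where "S = {z\<in>V. E x z \<and> gdist V E z y = n}"
  have fS: "finite S" using assms(1) by (auto simp: S_def conn_graph_def)
  have "Suc n \<in> {1..diameter V E}"
    using gdist_le_diam[OF assms(1) Suc.prems(1,2)] Suc.prems(3) by simp
  then have "card {z\<in>V. E x z \<and> gdist V E z y = Suc n - 1} = c (Suc n)"
    using assms(2) Suc.prems(1-3) unfolding intersection_c_def by blast
  then have cS: "card S = c (Suc n)" by (simp add: S_def)
  have "card (geodesics_between V E x y) = card (\<Union>z\<in>S. (Cons x) ` geodesics_between V E z y)"
    using geod_decomp[OF assms(1) Suc.prems] S_def by simp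
  also have "\<dots> = (\<Sum>z\<in>S. card ((Cons x) ` geodesics_between V E z y))"
    by (rule card_UN_disjoint[OF fS]) (auto simp: finite_geod[OF assms(1)], auto simp: geodesics_between_def geodesic_def)
  also have "\<dots> = (\<Sum>z\<in>S. (\<Prod>j=1..n. c j))"
    by (rule sum.cong[OF refl]) (simp add: card_image S_def Suc.IH Suc.prems(2))
  also have "\<dots> = (\<Prod>j=1..Suc n. c j)" using cS by (simp add: prod.nat_ivl_Suc')
  finally show ?case .
qed

theorem lemma3p1:
  fixes V :: "'a set" and E :: "'a \<Rightarrow> 'a \<Rightarrow> bool" and G :: "('a \<Rightarrow> 'a) set"
    and c :: "nat \<Rightarrow> nat" and d :: nat and X Y :: 'a
  assumes "conn_graph V E"
    and "aut_subgroup V E G"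
    and "distance_transitive V E G"
    and "d = diameter V E"
    and "intersection_c V E c"
    and "X \<in> V" and "Y \<in> V" and "gdist V E X Y = d"
  shows "(geodesic_transitive V E G \<longleftrightarrow>
           (\<forall>p\<in>geodesics_between V E X Y. \<forall>q\<in>geodesics_between V E X Y.
              \<exists>g\<in>G. g X = X \<and> g Y = Y \<and> map g p = q))
         \<and> card (geodesics_between V E X Y) = (\<Prod>i=1..d. c i)"
proof (intro conjI iffI ballI)
  show "card (geodesics_between V E X Y) = (\<Prod>i=1..d. c i)"
    using count_geod[OF assms(1,5,6,7,8)] .
next
  fix p q assume GT: "geodesic_transitive V E G"
    and pq: "p \<in> geodesics_between V E X Y" "q \<in> geodesics_between V E X Y"
  have p: "walk V E p" "hd p = X" "last p = Y" "length p = d + 1" "p \<noteq> []"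
    using pq(1) assms(8) by (auto simp: geodesics_between_def geodesic_def walk_def)
  have q: "walk V E q" "hd q = X" "last q = Y" "length q = d + 1" "q \<noteq> []"
    using pq(2) assms(8) by (auto simp: geodesics_between_def geodesic_def walk_def)
  show "\<exists>g\<in>G. g X = X \<and> g Y = Y \<and> map g p = q"
  proof (cases "d = 0")
    case True
    then have "X = Y" using gdist_0[OF assms(1,6,7)] assms(8) by simp
    have "p = [X]" "q = [X]" using p q True by (auto simp: length_Suc_conv)
    moreover obtain k where "k \<in> G" "\<forall>x\<in>V. k x = x" using G_one[OF assms(2)] by blast
    ultimately show ?thesis using \<open>X = Y\<close> assms(6) by auto
  next
    case False
    have "p \<in> geodesics_of_length V E d" "q \<in> geodesics_of_length V E d"
      using pq assms(6,7) p q by (auto simp: geodesics_of_length_def geodesics_between_def)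
    then obtain g where g: "g \<in> G" "map g p = q"
    proof -
      have "1 \<le> d" using False by simp
      then show ?thesis using GT that \<open>p \<in> geodesics_of_length V E d\<close>
        \<open>q \<in> geodesics_of_length V E d\<close> unfolding geodesic_transitive_def by blast
    qed
    have "g X = hd (map g p)" using p by (simp add: hd_map)
    then have "g X = X" using g q by simp
    moreover have "g Y = last (map g p)" using p by (simp add: last_map)
    then have "g Y = Y" using g q by simp
    ultimately show ?thesis using g by blast
  qed
next
  assume ST: "\<forall>p\<in>geodesics_between V E X Y. \<forall>q\<in>geodesics_between V E X Y.
              \<exists>g\<in>G. g X = X \<and> g Y = Y \<and> map g p = q"
  have ext: "\<exists>P g. g \<in> G \<and> set P \<subseteq> V \<and> take (length p) P = p \<and> map g P \<in> geodesics_between V E X Y"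
    if pl: "p \<in> geodesics_of_length V E l" for p l
  proof -
    obtain u v where uv: "u \<in> V" "v \<in> V" "geodesic V E u v p"
      using pl by (auto simp: geodesics_of_length_def)
    define n where "n = diameter V E - gdist V E u v"
    have n: "gdist V E u v + n = diameter V E"
      using gdist_le_diam[OF assms(1) uv(1,2)] n_def by simp
    obtain P where P: "geodesic V E u (last P) P" "last P \<in> V" "gdist V E u (last P) = diameter V E"
      "take (length p) P = p"
      using ext_full[OF assms(1-3) uv n] by blast
    obtain g where g: "g \<in> G" "g u = X" "g (last P) = Y"
    proof -
      have "gdist V E u (last P) = gdist V E X Y" using P(3) assms(4,8) by simp
      then show ?thesis using that assms(3) uv(1) P(2) assms(6,7) unfolding distance_transitive_def
        by blast
    qed
    have "geodesic V E X Y (map g P)"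
      using geodesic_aut[OF assms(1,2) g(1) uv(1) P(2) P(1)] g by simp
    moreover have "set P \<subseteq> V" using P(1) by (simp add: geodesic_def walk_def)
    ultimately show ?thesis using g P(4)
      by (intro exI[of _ P] exI[of _ g]) (simp add: geodesics_between_def)
  qed
  show "geodesic_transitive V E G" unfolding geodesic_transitive_def
  proof (intro allI impI ballI)
    fix l p q assume "1 \<le> l" and p: "p \<in> geodesics_of_length V E l"
      and q: "q \<in> geodesics_of_length V E l"
    obtain P g1 where P: "g1 \<in> G" "set P \<subseteq> V" "take (length p) P = p"
      "map g1 P \<in> geodesics_between V E X Y" using ext[OF p] by blast
    obtain Q g2 where Q: "g2 \<in> G" "set Q \<subseteq> V" "take (length q) Q = q"
      "map g2 Q \<in> geodesics_between V E X Y" using ext[OF q] by blast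
    obtain h where h: "h \<in> G" "map h (map g1 P) = map g2 Q" using ST P(4) Q(4) by blast
    obtain h2 where h2: "h2 \<in> G" "\<forall>x\<in>V. h2 (g2 x) = x" using G_inv[OF assms(2) Q(1)] by blast
    obtain k1 where k1: "k1 \<in> G" "\<forall>x\<in>V. k1 x = h (g1 x)" using G_comp[OF assms(2) h(1) P(1)] by blast
    obtain k where k: "k \<in> G" "\<forall>x\<in>V. k x = h2 (k1 x)" using G_comp[OF assms(2) h2(1) k1(1)] by blast
    have "map k P = map h2 (map h (map g1 P))"
      using P(2) k k1 by (simp add: map_eq_conv subset_iff)
    also have "\<dots> = map h2 (map g2 Q)" using h(2) by simp
    also have "\<dots> = Q" using Q(2) h2(2) by (induction Q) auto
    finally have kPQ: "map k P = Q" .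
    have lpq: "length p = length q" using p q by (auto simp: geodesics_of_length_def)
    have "take (length p) (map k P) = map k p" using P(3) by (simp add: take_map)
    then have "map k p = take (length p) (map k P)" by simp
    also have "\<dots> = q" using kPQ lpq Q(3) by simp
    finally show "\<exists>g\<in>G. map g p = q" using k(1) by blast
  qed
qed

end
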